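(* Let $G$ be a digraph. Then $G^{\top\bot}$ is congruence modular (i.e. has Gumm polymorphisms) if and only if $G^{\top\bot}$ is congruence distributive (i.e. has Jónsson polymorphisms).
   Context: Digraphs are finite and loopless: $G=(V,E)$ with $E\subseteq V\times V$. $G^{\top}$ is the digraph on $V\cup\{\top\}$ ($\top\notin V$ new) with edge set $E\cup\{(v,\top):v\in V\}$; $G^\bot$ is the digraph on $V\cup\{\bot\}$ with edge set $E\cup\{(\bot,v):v\in V\}$; $G^{\top\bot}=(G^\top)^\bot$. A polymorphism of arity $k$ is a map $f:V^k\to V$ with $(f(a_1,\dots,a_k),f(b_1,\dots,b_k))\in E$ whenever all $(a_i,b_i)\in E$. Gumm polymorphisms: ternary polymorphisms $s_0,\dots,s_{2n},p$ with $s_0(x,y,z)=x$; $s_i(x,y,x)=x$ for all $i\le 2n$; $s_i(x,y,y)=s_{i+1}(x,y,y)$ for even $i<2n$; $s_i(x,x,y)=s_{i+1}(x,x,y)$ for odd $i<2n$; $s_{2n}(x,y,y)=p(x,y,y)$; $p(x,x,y)=y$ (identically on the vertex set). Jónsson polymorphisms: ternary polymorphisms $J_0,\dots,J_n$ with $J_0(x,y,z)=x$; $J_i(x,y,x)=x$ for all $i\le n$; $J_i(x,x,y)=J_{i+1}(x,x,y)$ for even $i<n$; $J_i(x,y,y)=J_{i+1}(x,y,y)$ for odd $i<n$; $J_n(x,y,z)=z$. *)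

theory Defs
  imports Main
begin

type_synonym 'a digraph = "'a set \<times> ('a \<times> 'a) set"

definition is_digraph :: "'a digraph \<Rightarrow> bool" where
  "is_digraph G \<longleftrightarrow> finite (fst G) \<and> snd G \<subseteq> fst G \<times> fst G
     \<and> (\<forall>v. (v, v) \<notin> snd G)"

text \<open>G^top: new vertex None (=top), old vertices embedded via Some.\<close>
definition add_top :: "'a digraph \<Rightarrow> 'a option digraph" where
  "add_top G = (Some ` fst G \<union> {None},
                map_prod Some Some ` snd G \<union> {(Some v, None) | v. v \<in> fst G})"

text \<open>G^bot: new vertex None (=bot), old vertices embedded via Some.\<close>
definition add_bot :: "'a digraph \<Rightarrow> 'a option digraph" where
  "add_bot G = (Some ` fst G \<union> {None},
                map_prod Some Some ` snd G \<union> {(None, Some v) | v. v \<in> fst G})"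

definition add_top_bot :: "'a digraph \<Rightarrow> 'a option option digraph" where
  "add_top_bot G = add_bot (add_top G)"

definition ternary_polymorphism :: "'a digraph \<Rightarrow> ('a \<Rightarrow> 'a \<Rightarrow> 'a \<Rightarrow> 'a) \<Rightarrow> bool" where
  "ternary_polymorphism G f \<longleftrightarrow>
     (\<forall>x\<in>fst G. \<forall>y\<in>fst G. \<forall>z\<in>fst G. f x y z \<in> fst G) \<and>
     (\<forall>a1 a2 a3 b1 b2 b3. (a1, b1) \<in> snd G \<and> (a2, b2) \<in> snd G \<and> (a3, b3) \<in> snd G
        \<longrightarrow> (f a1 a2 a3, f b1 b2 b3) \<in> snd G)"

definition has_gumm_polymorphisms :: "'a digraph \<Rightarrow> bool" where
  "has_gumm_polymorphisms G \<longleftrightarrow>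
    (\<exists>(n::nat) (s :: nat \<Rightarrow> 'a \<Rightarrow> 'a \<Rightarrow> 'a \<Rightarrow> 'a) p.
       (\<forall>i\<le>2*n. ternary_polymorphism G (s i)) \<and> ternary_polymorphism G p \<and>
       (\<forall>x\<in>fst G. \<forall>y\<in>fst G. \<forall>z\<in>fst G. s 0 x y z = x) \<and>
       (\<forall>i\<le>2*n. \<forall>x\<in>fst G. \<forall>y\<in>fst G. s i x y x = x) \<and>
       (\<forall>i<2*n. even i \<longrightarrow> (\<forall>x\<in>fst G. \<forall>y\<in>fst G. s i x y y = s (Suc i) x y y)) \<and>
       (\<forall>i<2*n. odd i \<longrightarrow> (\<forall>x\<in>fst G. \<forall>y\<in>fst G. s i x x y = s (Suc i) x x y)) \<and>
       (\<forall>x\<in>fst G. \<forall>y\<in>fst G. s (2*n) x y y = p x y y) \<and>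
       (\<forall>x\<in>fst G. \<forall>y\<in>fst G. p x x y = y))"

definition has_jonsson_polymorphisms :: "'a digraph \<Rightarrow> bool" where
  "has_jonsson_polymorphisms G \<longleftrightarrow>
    (\<exists>(n::nat) (J :: nat \<Rightarrow> 'a \<Rightarrow> 'a \<Rightarrow> 'a \<Rightarrow> 'a).
       (\<forall>i\<le>n. ternary_polymorphism G (J i)) \<and>
       (\<forall>x\<in>fst G. \<forall>y\<in>fst G. \<forall>z\<in>fst G. J 0 x y z = x) \<and>
       (\<forall>i\<le>n. \<forall>x\<in>fst G. \<forall>y\<in>fst G. J i x y x = x) \<and>
       (\<forall>i<n. even i \<longrightarrow> (\<forall>x\<in>fst G. \<forall>y\<in>fst G. J i x x y = J (Suc i) x x y)) \<and>
       (\<forall>i<n. odd i \<longrightarrow> (\<forall>x\<in>fst G. \<forall>y\<in>fst G. J i x y y = J (Suc i) x y y)) \<and>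
       (\<forall>x\<in>fst G. \<forall>y\<in>fst G. \<forall>z\<in>fst G. J n x y z = z))"

end

theory Submission
  imports Defs
begin

lemma proj1_poly: "ternary_polymorphism G (\<lambda>x y z. x)"
  unfolding ternary_polymorphism_def by auto

lemma proj3_poly: "ternary_polymorphism G (\<lambda>x y z. z)"
  unfolding ternary_polymorphism_def by auto

lemma H_edge_mem:
  assumes "is_digraph G" "(a,b) \<in> snd (add_top_bot G)"
  shows "a \<in> fst (add_top_bot G) \<and> b \<in> fst (add_top_bot G)"
  using assms unfolding is_digraph_def add_top_bot_def add_bot_def add_top_def by auto

lemma H_edge_notbot: "(a,b) \<in> snd (add_top_bot G) \<Longrightarrow> b \<noteq> None"
  unfolding add_top_bot_def add_bot_def add_top_def by auto

lemma H_edge_nottop: "(a,b) \<in> snd (add_top_bot G) \<Longrightarrow> a \<noteq> Some None"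
  unfolding add_top_bot_def add_bot_def add_top_def by auto

lemma H_bot_edge: "a \<in> fst (add_top_bot G) \<Longrightarrow> a \<noteq> None \<Longrightarrow> (None, a) \<in> snd (add_top_bot G)"
  unfolding add_top_bot_def add_bot_def add_top_def by auto

lemma H_top_edge: "a \<in> fst (add_top_bot G) \<Longrightarrow> a \<noteq> Some None \<Longrightarrow> (a, Some None) \<in> snd (add_top_bot G)"
  unfolding add_top_bot_def add_bot_def add_top_def by auto

lemma H_bot_mem: "None \<in> fst (add_top_bot G)"
  unfolding add_top_bot_def add_bot_def add_top_def by auto

lemma H_top_mem: "Some None \<in> fst (add_top_bot G)"
  unfolding add_top_bot_def add_bot_def add_top_def by auto

lemma pprime_poly:
  assumes dg: "is_digraph G"
    and pp: "ternary_polymorphism (add_top_bot G) p"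
    and pid: "\<forall>x\<in>fst (add_top_bot G). \<forall>y\<in>fst (add_top_bot G). p x x y = y"
  shows "ternary_polymorphism (add_top_bot G) (\<lambda>x y z. if x = z then x else p x y z)"
proof -
  let ?H = "add_top_bot G"
  have mem: "\<forall>x\<in>fst ?H. \<forall>y\<in>fst ?H. \<forall>z\<in>fst ?H. (if x = z then x else p x y z) \<in> fst ?H"
    using pp unfolding ternary_polymorphism_def by auto
  have edge: "(if a1 = a3 then a1 else p a1 a2 a3, if b1 = b3 then b1 else p b1 b2 b3) \<in> snd ?H"
    if e1: "(a1, b1) \<in> snd ?H" and e2: "(a2, b2) \<in> snd ?H" and e3: "(a3, b3) \<in> snd ?H"
    for a1 a2 a3 b1 b2 b3
  proof (cases "a1 = a3")
    case True
    show ?thesis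
    proof (cases "b1 = b3")
      case True
      then show ?thesis using \<open>a1 = a3\<close> e1 by simp
    next
      case False
      have "(None, b1) \<in> snd ?H" using H_bot_edge H_edge_notbot H_edge_mem[OF dg e1] e1 by blast
      moreover have "(None, b2) \<in> snd ?H" using H_bot_edge H_edge_notbot H_edge_mem[OF dg e2] e2 by blast
      ultimately have "(p None None a3, p b1 b2 b3) \<in> snd ?H"
        using pp e3 unfolding ternary_polymorphism_def by blast
      moreover have "p None None a3 = a3" using pid H_bot_mem H_edge_mem[OF dg e3] by blast
      ultimately show ?thesis using True False by simp
    qed
  next
    case False
    show ?thesis
    proof (cases "b1 = b3")
      case True
      have "(a1, Some None) \<in> snd ?H" using H_top_edge H_edge_nottop H_edge_mem[OF dg e1] e1 by blast
      moreover have "(a2, Some None) \<in> snd ?H" using H_top_edge H_edge_nottop H_edge_mem[OF dg e2] e2 by blast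
      ultimately have "(p a1 a2 a3, p (Some None) (Some None) b3) \<in> snd ?H"
        using pp e3 unfolding ternary_polymorphism_def by blast
      moreover have "p (Some None) (Some None) b3 = b3" using pid H_top_mem H_edge_mem[OF dg e3] by blast
      ultimately show ?thesis using True False by simp
    next
      case False
      then show ?thesis using \<open>a1 \<noteq> a3\<close> pp e1 e2 e3 unfolding ternary_polymorphism_def by auto
    qed
  qed
  show ?thesis unfolding ternary_polymorphism_def
  proof (intro conjI allI impI)
    show "\<forall>x\<in>fst ?H. \<forall>y\<in>fst ?H. \<forall>z\<in>fst ?H. (if x = z then x else p x y z) \<in> fst ?H"
      by (rule mem)
  next
    fix a1 a2 a3 b1 b2 b3
    assume "(a1, b1) \<in> snd ?H \<and> (a2, b2) \<in> snd ?H \<and> (a3, b3) \<in> snd ?H"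
    then show "(if a1 = a3 then a1 else p a1 a2 a3, if b1 = b3 then b1 else p b1 b2 b3) \<in> snd ?H"
      using edge by blast
  qed
qed

lemma jonsson_to_gumm:
  assumes "has_jonsson_polymorphisms H"
  shows "has_gumm_polymorphisms H"
proof -
  obtain n J where
    p1: "\<forall>i\<le>n. ternary_polymorphism H (J i)" and
    p2: "\<forall>x\<in>fst H. \<forall>y\<in>fst H. \<forall>z\<in>fst H. J 0 x y z = x" and
    p3: "\<forall>i\<le>n. \<forall>x\<in>fst H. \<forall>y\<in>fst H. J i x y x = x" and
    p4: "\<forall>i<n. even i \<longrightarrow> (\<forall>x\<in>fst H. \<forall>y\<in>fst H. J i x x y = J (Suc i) x x y)" and
    p5: "\<forall>i<n. odd i \<longrightarrow> (\<forall>x\<in>fst H. \<forall>y\<in>fst H. J i x y y = J (Suc i) x y y)" and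
    p6: "\<forall>x\<in>fst H. \<forall>y\<in>fst H. \<forall>z\<in>fst H. J n x y z = z"
    by (insert assms[unfolded has_jonsson_polymorphisms_def], elim exE conjE, rule that, assumption+)
  define s where "s i = (if i = 0 then (\<lambda>x y z. x) else J (min (i - 1) n))" for i
  have a1: "\<forall>i\<le>2*(n+1). ternary_polymorphism H (s i)"
  proof (intro allI impI)
    fix i assume "i \<le> 2*(n+1)"
    have "min (i - 1) n \<le> n" by simp
    then show "ternary_polymorphism H (s i)"
      using p1 proj1_poly[of H] unfolding s_def by (cases "i = 0") simp_all
  qed
  have a3: "\<forall>i\<le>2*(n+1). \<forall>x\<in>fst H. \<forall>y\<in>fst H. s i x y x = x"
  proof (intro allI impI ballI)
    fix i x y assume "i \<le> 2*(n+1)" "x \<in> fst H" "y \<in> fst H"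
    have "min (i - 1) n \<le> n" by simp
    then show "s i x y x = x"
      using p3 \<open>x \<in> fst H\<close> \<open>y \<in> fst H\<close> unfolding s_def by simp
  qed
  have a4: "\<forall>i<2*(n+1). even i \<longrightarrow> (\<forall>x\<in>fst H. \<forall>y\<in>fst H. s i x y y = s (Suc i) x y y)"
  proof (intro allI impI ballI)
    fix i x y assume i: "i < 2*(n+1)" "even i" and xy: "x \<in> fst H" "y \<in> fst H"
    show "s i x y y = s (Suc i) x y y"
    proof (cases "i = 0")
      case True then show ?thesis using p2 xy unfolding s_def by simp
    next
      case False
      show ?thesis
      proof (cases "i - 1 < n")
        case True
        have "min (i - 1) n = i - 1" "min i n = i" "odd (i - 1)" "Suc (i - 1) = i"
          using True False i by auto
        moreover have "J (i - 1) x y y = J (Suc (i - 1)) x y y"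
          using p5 True xy \<open>odd (i - 1)\<close> by blast
        ultimately show ?thesis using False unfolding s_def by simp
      next
        case c: False
        have "min (i - 1) n = n" "min i n = n" using c by auto
        then show ?thesis using False unfolding s_def by simp
      qed
    qed
  qed
  have a5: "\<forall>i<2*(n+1). odd i \<longrightarrow> (\<forall>x\<in>fst H. \<forall>y\<in>fst H. s i x x y = s (Suc i) x x y)"
  proof (intro allI impI ballI)
    fix i x y assume i: "i < 2*(n+1)" "odd i" and xy: "x \<in> fst H" "y \<in> fst H"
    have i0: "i \<noteq> 0" using i by (cases i) auto
    show "s i x x y = s (Suc i) x x y"
    proof (cases "i - 1 < n")
      case True
      have "min (i - 1) n = i - 1" "min i n = i" "even (i - 1)" "Suc (i - 1) = i"
        using True i0 i by auto
      moreover have "J (i - 1) x x y = J (Suc (i - 1)) x x y"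
        using p4 True xy \<open>even (i - 1)\<close> by blast
      ultimately show ?thesis using i0 unfolding s_def by simp
    next
      case c: False
      have "min (i - 1) n = n" "min i n = n" using c by auto
      then show ?thesis using i0 unfolding s_def by simp
    qed
  qed
  have a6: "\<forall>x\<in>fst H. \<forall>y\<in>fst H. s (2*(n+1)) x y y = (\<lambda>x y z. z) x y y"
  proof (intro ballI)
    fix x y assume "x \<in> fst H" "y \<in> fst H"
    have "min (2*(n+1) - 1) n = n" by simp
    then show "s (2*(n+1)) x y y = (\<lambda>x y z. z) x y y"
      using p6 \<open>x \<in> fst H\<close> \<open>y \<in> fst H\<close> unfolding s_def by simp
  qed
  have a2: "\<forall>x\<in>fst H. \<forall>y\<in>fst H. \<forall>z\<in>fst H. s 0 x y z = x" unfolding s_def by simp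
  show ?thesis unfolding has_gumm_polymorphisms_def
    by (rule exI[of _ "n+1"], rule exI[of _ s], rule exI[of _ "\<lambda>x y z. z"],
        intro conjI, (fact a1 a2 a3 a4 a5 a6 proj3_poly)+, simp)
qed

lemma gumm_to_jonsson:
  assumes dg: "is_digraph G" and "has_gumm_polymorphisms (add_top_bot G)"
  shows "has_jonsson_polymorphisms (add_top_bot G)"
proof -
  let ?H = "add_top_bot G"
  obtain n s p where
    g1: "\<forall>i\<le>2*n. ternary_polymorphism ?H (s i)" and
    g1p: "ternary_polymorphism ?H p" and
    g2: "\<forall>x\<in>fst ?H. \<forall>y\<in>fst ?H. \<forall>z\<in>fst ?H. s 0 x y z = x" and
    g3: "\<forall>i\<le>2*n. \<forall>x\<in>fst ?H. \<forall>y\<in>fst ?H. s i x y x = x" and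
    g4: "\<forall>i<2*n. even i \<longrightarrow> (\<forall>x\<in>fst ?H. \<forall>y\<in>fst ?H. s i x y y = s (Suc i) x y y)" and
    g5: "\<forall>i<2*n. odd i \<longrightarrow> (\<forall>x\<in>fst ?H. \<forall>y\<in>fst ?H. s i x x y = s (Suc i) x x y)" and
    g6: "\<forall>x\<in>fst ?H. \<forall>y\<in>fst ?H. s (2*n) x y y = p x y y" and
    g7: "\<forall>x\<in>fst ?H. \<forall>y\<in>fst ?H. p x x y = y"
    by (insert assms(2)[unfolded has_gumm_polymorphisms_def], elim exE conjE, rule that, assumption+)
  define q where "q = (\<lambda>x y z. if x = z then x else p x y z)"
  have qpoly: "ternary_polymorphism ?H q" unfolding q_def using pprime_poly[OF dg g1p g7] .
  define J where "J i = (if i = 0 then (\<lambda>x y z. x) else if i \<le> 2*n+1 then s (i - 1)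
     else if i = 2*n+2 then q else (\<lambda>x y z. z))" for i
  have b1: "\<forall>i\<le>2*n+3. ternary_polymorphism ?H (J i)"
  proof (intro allI impI)
    fix i assume "i \<le> 2*n+3"
    show "ternary_polymorphism ?H (J i)"
      using g1 qpoly proj1_poly[of ?H] proj3_poly[of ?H] unfolding J_def
      by (cases "i = 0"; cases "i \<le> 2*n+1"; cases "i = 2*n+2"; auto)
  qed
  have b2: "\<forall>x\<in>fst ?H. \<forall>y\<in>fst ?H. \<forall>z\<in>fst ?H. J 0 x y z = x" unfolding J_def by simp
  have b3: "\<forall>i\<le>2*n+3. \<forall>x\<in>fst ?H. \<forall>y\<in>fst ?H. J i x y x = x"
  proof (intro allI impI ballI)
    fix i x y assume "i \<le> 2*n+3" "x \<in> fst ?H" "y \<in> fst ?H"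
    then show "J i x y x = x"
      using g3 unfolding J_def q_def
      by (cases "i = 0"; cases "i \<le> 2*n+1"; cases "i = 2*n+2"; auto)
  qed
  have b4: "\<forall>i<2*n+3. even i \<longrightarrow> (\<forall>x\<in>fst ?H. \<forall>y\<in>fst ?H. J i x x y = J (Suc i) x x y)"
  proof (intro allI impI ballI)
    fix i x y assume i: "i < 2*n+3" "even i" and xy: "x \<in> fst ?H" "y \<in> fst ?H"
    show "J i x x y = J (Suc i) x x y"
    proof (cases "i = 0")
      case True then show ?thesis using g2 xy unfolding J_def by simp
    next
      case False
      show ?thesis
      proof (cases "i \<le> 2*n")
        case True
        have "odd (i - 1)" "i - 1 < 2*n" "Suc (i - 1) = i" using True False i by auto
        then have "s (i - 1) x x y = s (Suc (i - 1)) x x y" using g5 xy by blast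
        then have "s (i - 1) x x y = s i x x y" using \<open>Suc (i - 1) = i\<close> by simp
        then show ?thesis using True False unfolding J_def by simp
      next
        case c: False
        then have "i = 2*n+2" using i by presburger
        then show ?thesis using xy g7 unfolding J_def q_def by auto
      qed
    qed
  qed
  have b5: "\<forall>i<2*n+3. odd i \<longrightarrow> (\<forall>x\<in>fst ?H. \<forall>y\<in>fst ?H. J i x y y = J (Suc i) x y y)"
  proof (intro allI impI ballI)
    fix i x y assume i: "i < 2*n+3" "odd i" and xy: "x \<in> fst ?H" "y \<in> fst ?H"
    have i0: "i \<noteq> 0" using i by (cases i) auto
    show "J i x y y = J (Suc i) x y y"
    proof (cases "i < 2*n+1")
      case True
      have "even (i - 1)" "i - 1 < 2*n" "Suc (i - 1) = i" using True i0 i by auto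
      then have "s (i - 1) x y y = s (Suc (i - 1)) x y y" using g4 xy by blast
      then have "s (i - 1) x y y = s i x y y" using \<open>Suc (i - 1) = i\<close> by simp
      then show ?thesis using True i0 unfolding J_def by simp
    next
      case c: False
      then have "i = 2*n+1" using i by presburger
      then show ?thesis using xy g6 g7 unfolding J_def q_def by auto
    qed
  qed
  have b6: "\<forall>x\<in>fst ?H. \<forall>y\<in>fst ?H. \<forall>z\<in>fst ?H. J (2*n+3) x y z = z" unfolding J_def by simp
  show ?thesis unfolding has_jonsson_polymorphisms_def
    by (rule exI[of _ "2*n+3"], rule exI[of _ J], intro conjI, (fact b1 b2 b3 b4 b5 b6)+)
qed

theorem theorem7p5:
  fixes G :: "'a digraph"
  assumes "is_digraph G"
  shows "has_gumm_polymorphisms (add_top_bot G) \<longleftrightarrow> has_jonsson_polymorphisms (add_top_bot G)"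
  using gumm_to_jonsson[OF assms] jonsson_to_gumm by blast

end
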